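(* Let $n\ge 3$ and let $A$ be the matrix obtained from $V_n$ by replacing the entries $a_{ij}$ for a nonempty set of positions $(i,j)$ with $2\le i\le j\le n-1$ by $t$. Viewing $\det A$ as a polynomial in the indeterminates $s$ and $t$, the coefficient of the monomial $s^{n-3}t^3$ in $\det A$ is nonzero.
   Context: $V_n$ is the $n\times n$ matrix $(a_{ij})$ with: $a_{1j}=t$ for $1\le j\le n-1$ and $a_{1n}=0$; $a_{i+1,i}=s$ for $1\le i\le n-1$; $a_{ij}=0$ for $i>j+1$; $a_{ij}=0$ for $2\le i\le j\le n-1$; and $a_{in}=t$ for $2\le i\le n$. Every entry of $V_n$ and of $A$ is $0$, $s$ or $t$, so $\det A$ is a polynomial in $s,t$ with integer coefficients. *)

theory Defs
  imports "Jordan_Normal_Form.Determinant" "HOL-Computational_Algebra.Polynomial"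
begin

definition V_entry :: "nat \<Rightarrow> 'a \<Rightarrow> 'a \<Rightarrow> nat \<Rightarrow> nat \<Rightarrow> 'a::zero" where
  "V_entry n s t i j =
     (if i = 1 then (if j \<le> n - 1 then t else 0)
      else if j = n then t
      else if i = j + 1 then s
      else 0)"

text \<open>The matrix V_n (Jordan_Normal_Form matrices are 0-indexed, so shift by one).\<close>
definition V_mat :: "nat \<Rightarrow> 'a \<Rightarrow> 'a \<Rightarrow> 'a::zero mat" where
  "V_mat n s t = mat n n (\<lambda>(i, j). V_entry n s t (i + 1) (j + 1))"

definition A_mat :: "nat \<Rightarrow> 'a \<Rightarrow> 'a \<Rightarrow> (nat \<times> nat) set \<Rightarrow> 'a::zero mat" where
  "A_mat n s t P = mat n n (\<lambda>(i, j). if (i + 1, j + 1) \<in> P then t else V_mat n s t $$ (i, j))"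

text \<open>Indeterminates: bivariate integer polynomials are modelled as int poly poly;
  s is the inner variable, t the outer variable.\<close>
definition var_s :: "int poly poly" where "var_s = [:[:0, 1:]:]"
definition var_t :: "int poly poly" where "var_t = [:0, 1:]"

end

theory Submission
  imports Defs
begin

lemma cvar: "coeff (coeff (var_s^a * var_t^b) 3) m = (if b = 3 \<and> a = m then 1 else 0)"
proof -
  have t: "var_t^b = monom 1 b" unfolding var_t_def by (simp add: monom_altdef)
  have s: "var_s^a = [:monom 1 a:]" unfolding var_s_def by (simp add: monom_altdef poly_const_pow)
  show ?thesis unfolding t s by (simp add: coeff_monom)
qed

lemma cof: "coeff (coeff ((of_int k :: int poly poly) * X) i) j = k * coeff (coeff X i) j"
  by (simp add: of_int_poly)

definition isT :: "nat \<Rightarrow> (nat \<times> nat) set \<Rightarrow> nat \<Rightarrow> nat \<Rightarrow> bool" where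
  "isT n P i j \<longleftrightarrow> (i = 0 \<and> j \<le> n - 2) \<or> (0 < i \<and> j = n - 1) \<or> (i + 1, j + 1) \<in> P"

definition isS :: "nat \<Rightarrow> nat \<Rightarrow> bool" where
  "isS i j \<longleftrightarrow> 0 < i \<and> i = j + 1"

lemma entry:
  assumes "i < n" "j < n" "2 \<le> n"
  shows "A_mat n s t P $$ (i, j) = (if isT n P i j then t else if isS i j then s else 0)"
  using assms unfolding A_mat_def V_mat_def V_entry_def isT_def isS_def by auto

lemma prodT:
  fixes f :: "nat \<Rightarrow> 'a::comm_semiring_1"
  assumes "finite I" "\<And>i. i \<in> I \<Longrightarrow> f i = (if T i then a else if S i then b else 0)"
  shows "prod f I = (if \<forall>i\<in>I. T i \<or> S i then a ^ card {i\<in>I. T i} * b ^ card {i\<in>I. \<not> T i} else 0)"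
proof (cases "\<forall>i\<in>I. T i \<or> S i")
  case True
  then have "prod f I = (\<Prod>i\<in>I. if T i then a else b)"
    using assms(2) by (intro prod.cong) auto
  also have "\<dots> = prod (\<lambda>_. a) (I \<inter> {i. T i}) * prod (\<lambda>_. b) (I \<inter> - {i. T i})"
    by (rule prod.If_cases[OF assms(1)])
  also have "\<dots> = a ^ card {i\<in>I. T i} * b ^ card {i\<in>I. \<not> T i}"
    by (simp add: Int_def Collect_conj_eq[symmetric] Compl_eq)
  finally show ?thesis using True by simp
next
  case False
  then obtain i where "i \<in> I" "\<not> T i" "\<not> S i" by auto
  then have "f i = 0" using assms(2) by auto
  then show ?thesis using False \<open>i \<in> I\<close> assms(1) by (auto intro: prod_zero)
qed

definition rho :: "nat \<Rightarrow> nat \<Rightarrow> nat" where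
  "rho n i = (if i = 0 then n - 1 else if i < n then i - 1 else i)"

definition sig :: "nat \<Rightarrow> nat \<Rightarrow> nat \<Rightarrow> nat \<Rightarrow> nat" where
  "sig n x y i = (if i = 0 then x - 2 else if i = x - 1 then y - 1 else if i = y then n - 1
     else if i < n then i - 1 else i)"

lemma rho_perm: assumes "1 \<le> n" shows "rho n permutes {0..<n}"
proof (rule bij_imp_permutes)
  show "bij_betw (rho n) {0..<n} {0..<n}"
    unfolding bij_betw_def
  proof
    show "inj_on (rho n) {0..<n}" unfolding inj_on_def rho_def by auto
    show "rho n ` {0..<n} = {0..<n}"
    proof
      show "rho n ` {0..<n} \<subseteq> {0..<n}" using assms unfolding rho_def by auto
      show "{0..<n} \<subseteq> rho n ` {0..<n}"
      proof
        fix y assume y: "y \<in> {0..<n}"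
        show "y \<in> rho n ` {0..<n}"
        proof (cases "y = n - 1")
          case True then show ?thesis using assms by (intro image_eqI[of _ _ 0]) (auto simp: rho_def)
        next
          case False then show ?thesis using y by (intro image_eqI[of _ _ "y+1"]) (auto simp: rho_def)
        qed
      qed
    qed
  qed
  show "\<And>x. x \<notin> {0..<n} \<Longrightarrow> rho n x = x" unfolding rho_def by auto
qed

lemma sig_eq:
  assumes "2 \<le> x" "x \<le> y" "y < n"
  shows "sig n x y = rho n \<circ> transpose 0 (x - 1) \<circ> transpose (x - 1) y"
proof
  fix i show "sig n x y i = (rho n \<circ> transpose 0 (x - 1) \<circ> transpose (x - 1) y) i"
    using assms unfolding sig_def rho_def transpose_def by auto
qed

lemma sig_perm:
  assumes "2 \<le> x" "x \<le> y" "y < n"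
  shows "sig n x y permutes {0..<n}"
  unfolding sig_eq[OF assms]
  using assms by (intro permutes_compose permutes_swap_id rho_perm) auto

lemma sign_sig:
  assumes "2 \<le> x" "x \<le> y" "y < n"
  shows "sign (sig n x y) = sign (rho n)"
proof -
  have pr: "permutation (rho n)" using rho_perm[of n] assms
    by (intro permutes_imp_permutation[of "{0..<n}"]) auto
  have pt: "permutation (transpose a b)" for a b :: nat by (rule permutation_swap_id)
  show ?thesis unfolding sig_eq[OF assms]
    using assms
    by (simp add: sign_compose pr pt permutation_compose sign_swap_id)
qed

lemma sig_good:
  assumes n3: "n \<ge> 3" and PS: "P \<subseteq> {(i, j). 2 \<le> i \<and> i \<le> j \<and> j \<le> n - 1}"
    and xy: "(x, y) \<in> P"
  shows "(\<forall>i<n. isT n P i (sig n x y i) \<or> isS i (sig n x y i)) \<and>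
         card {i\<in>{0..<n}. isT n P i (sig n x y i)} = 3"
proof -
  have b: "2 \<le> x" "x \<le> y" "y \<le> n - 1" using PS xy by auto
  have notP: "(i + 1, i) \<notin> P" for i using PS by auto
  have st: "{i\<in>{0..<n}. isT n P i (sig n x y i)} = {0, x - 1, y}"
  proof -
    have "(i < n \<and> isT n P i (sig n x y i)) \<longleftrightarrow> (i = 0 \<or> i = x - 1 \<or> i = y)" for i
      using b xy notP[of "i - 1"] notP[of i] n3 unfolding sig_def isT_def by auto
    then show ?thesis by auto
  qed
  have "\<forall>i<n. isT n P i (sig n x y i) \<or> isS i (sig n x y i)"
  proof (intro allI impI)
    fix i assume "i < n"
    then show "isT n P i (sig n x y i) \<or> isS i (sig n x y i)"
      using b xy n3 unfolding sig_def isT_def isS_def by auto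
  qed
  moreover have "card {0, x - 1, y} = 3" using b by auto
  ultimately show ?thesis using st by simp
qed

lemma good_sig:
  assumes n3: "n \<ge> 3" and PS: "P \<subseteq> {(i, j). 2 \<le> i \<and> i \<le> j \<and> j \<le> n - 1}"
    and pp: "p permutes {0..<n}"
    and nz: "\<forall>i<n. isT n P i (p i) \<or> isS i (p i)"
    and c3: "card {i\<in>{0..<n}. isT n P i (p i)} = 3"
  shows "\<exists>(x, y)\<in>P. p = sig n x y"
proof -
  have pl: "p i < n" if "i < n" for i using permutes_in_image[OF pp] that by auto
  have inj: "i = j" if "p i = p j" for i j using permutes_inj[OF pp] that by (auto dest: injD)
  have notP: "(i + 1, i) \<notin> P" for i using PS by auto
  have Tiff: "isT n P i (p i) \<longleftrightarrow> p i \<noteq> i - 1" if "0 < i" "i < n" for i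
  proof
    assume "isT n P i (p i)"
    then show "p i \<noteq> i - 1" using that notP[of "i - 1"] notP[of i] unfolding isT_def by auto
  next
    assume "p i \<noteq> i - 1"
    then show "isT n P i (p i)" using nz that unfolding isS_def by auto
  qed
  have T0: "isT n P 0 (p 0)" using nz[rule_format, of 0] n3 unfolding isS_def by auto
  define R where "R = {i\<in>{1..<n}. p i \<noteq> i - 1}"
  have eqR: "{i\<in>{0..<n}. isT n P i (p i)} = insert 0 R"
    using Tiff T0 n3 unfolding R_def by auto
  have "card R = 2"
  proof -
    have "0 \<notin> R" "finite R" unfolding R_def by auto
    then show ?thesis using c3 eqR by simp
  qed
  then have "\<exists>a b. R = {a, b} \<and> a < b"
    by (metis card_2_iff insert_commute linorder_neq_iff)
  then obtain a b where R: "R = {a, b}" "a < b" by blast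
  have ab: "1 \<le> a" "b < n" "p a \<noteq> a - 1" "p b \<noteq> b - 1" using R unfolding R_def by auto
  have oth: "p i = i - 1" if "1 \<le> i" "i < n" "i \<noteq> a" "i \<noteq> b" for i
    using that R unfolding R_def by auto
  have Ta: "isT n P a (p a)" and Tb: "isT n P b (p b)" using Tiff ab R by auto
  have ge: "p a \<ge> a" "p b \<ge> b" using Ta Tb ab R(2) PS unfolding isT_def by auto
  have pb: "p b = n - 1"
  proof (rule ccontr)
    assume "p b \<noteq> n - 1"
    then have k: "p b + 1 < n" using pl[of b] ab by auto
    then have "p (p b + 1) = p b" using oth[of "p b + 1"] ge R ab by auto
    then show False using inj[of "p b + 1" b] ge by auto
  qed
  have pa: "p a = b - 1"
  proof (rule ccontr)
    assume H: "p a \<noteq> b - 1"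
    have "p a \<noteq> n - 1" using pb inj[of a b] R by auto
    then have k: "p a + 1 < n" using pl[of a] ab R by auto
    then have "p (p a + 1) = p a" using oth[of "p a + 1"] ge R ab H by auto
    then show False using inj[of "p a + 1" a] ge by auto
  qed
  have p0: "p 0 = a - 1"
  proof -
    have "p 0 \<le> n - 2" using T0 PS unfolding isT_def by auto
    then have k: "p 0 + 1 < n" using n3 by auto
    show ?thesis
    proof (rule ccontr)
      assume H: "p 0 \<noteq> a - 1"
      show False
      proof (cases "p 0 + 1 = b")
        case True then show False using pa inj[of 0 a] ab by auto
      next
        case False
        then have "p (p 0 + 1) = p 0" using oth[of "p 0 + 1"] k H ab by auto
        then show False using inj[of "p 0 + 1" 0] by auto
      qed
    qed
  qed
  have Pm: "(a + 1, b) \<in> P" using Ta pa ab R(2) unfolding isT_def by (auto simp: Suc_diff_1)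
  have "p = sig n (a + 1) b"
  proof
    fix i show "p i = sig n (a + 1) b i"
    proof (cases "i < n")
      case True then show ?thesis using p0 pa pb oth[of i] ab R unfolding sig_def by auto
    next
      case False then show ?thesis using permutes_not_in[OF pp, of i] ab R(2) n3 unfolding sig_def by auto
    qed
  qed
  then show ?thesis using Pm by blast
qed

theorem proposition5p7:
  fixes n :: nat and P :: "(nat \<times> nat) set"
  assumes "n \<ge> 3"
    and "P \<subseteq> {(i, j). 2 \<le> i \<and> i \<le> j \<and> j \<le> n - 1}"
    and "P \<noteq> {}"
  shows "coeff (coeff (det (A_mat n var_s var_t P)) 3) (n - 3) \<noteq> 0"
proof -
  note n3 = assms(1) and PS = assms(2)
  define M where "M = A_mat n var_s var_t P"
  have Mc: "M \<in> carrier_mat n n" unfolding M_def A_mat_def by simp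
  define Perm where "Perm = {p. p permutes {0..<n}}"
  define G where "G = {p\<in>Perm. (\<forall>i<n. isT n P i (p i) \<or> isS i (p i)) \<and>
         card {i\<in>{0..<n}. isT n P i (p i)} = 3}"
  have finPerm: "finite Perm" unfolding Perm_def by (rule finite_permutations) simp
  have det: "det M = (\<Sum>p\<in>Perm. signof p * (\<Prod>i=0..<n. M $$ (i, p i)))"
    unfolding Perm_def by (rule det_def'[OF Mc])
  have trm: "coeff (coeff (signof p * (\<Prod>i=0..<n. M $$ (i, p i))) 3) (n - 3) =
      (if p \<in> G then sign p else 0)" if pP: "p \<in> Perm" for p
  proof -
    have pp: "p permutes {0..<n}" using pP unfolding Perm_def by simp
    have pl: "p i < n" if "i < n" for i using permutes_in_image[OF pp] that by auto
    let ?T = "\<lambda>i. isT n P i (p i)"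
    let ?S = "\<lambda>i. isS i (p i)"
    have pr: "(\<Prod>i=0..<n. M $$ (i, p i)) = (if \<forall>i\<in>{0..<n}. ?T i \<or> ?S i then
       var_t ^ card {i\<in>{0..<n}. ?T i} * var_s ^ card {i\<in>{0..<n}. \<not> ?T i} else 0)"
      by (rule prodT) (use pl n3 in \<open>auto simp: M_def entry\<close>)
    have cn: "card {i\<in>{0..<n}. ?T i} + card {i\<in>{0..<n}. \<not> ?T i} = n"
    proof -
      have "{i\<in>{0..<n}. ?T i} \<union> {i\<in>{0..<n}. \<not> ?T i} = {0..<n}" by auto
      moreover have "card ({i\<in>{0..<n}. ?T i} \<union> {i\<in>{0..<n}. \<not> ?T i}) =
          card {i\<in>{0..<n}. ?T i} + card {i\<in>{0..<n}. \<not> ?T i}"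
        by (rule card_Un_disjoint) auto
      ultimately show ?thesis by simp
    qed
    show ?thesis
    proof (cases "\<forall>i\<in>{0..<n}. ?T i \<or> ?S i")
      case True
      have "coeff (coeff (signof p * (\<Prod>i=0..<n. M $$ (i, p i))) 3) (n - 3)
         = sign p * (if card {i\<in>{0..<n}. ?T i} = 3 \<and> card {i\<in>{0..<n}. \<not> ?T i} = n - 3 then 1 else 0)"
        unfolding cof pr using True by (simp add: mult.commute[of "var_t ^ _"] cvar)
      also have "\<dots> = (if p \<in> G then sign p else 0)"
        using True cn pP unfolding G_def by auto
      finally show ?thesis .
    next
      case False
      then show ?thesis unfolding cof pr G_def by auto
    qed
  qed
  have injP: "inj_on (\<lambda>(x, y). sig n x y) P"
    proof (rule inj_onI)
      fix q r assume q: "q \<in> P" and r: "r \<in> P" and e: "(\<lambda>(x, y). sig n x y) q = (\<lambda>(x, y). sig n x y) r"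
      obtain x y where qq: "q = (x, y)" by (cases q)
      obtain x' y' where rr: "r = (x', y')" by (cases r)
      have b: "2 \<le> x" "x \<le> y" "2 \<le> x'" "x' \<le> y'" using PS q r qq rr by auto
      have e': "sig n x y = sig n x' y'" using e qq rr by simp
      have "sig n x y 0 = sig n x' y' 0" using e' by simp
      then have "x = x'" using b unfolding sig_def by auto
      moreover have "sig n x y (x - 1) = sig n x' y' (x - 1)" using e' by simp
      ultimately have "y = y'" using b unfolding sig_def by auto
      then show "q = r" using qq rr \<open>x = x'\<close> by simp
    qed
  have "coeff (coeff (det M) 3) (n - 3) = (\<Sum>p\<in>Perm. if p \<in> G then sign p else 0)"
    unfolding det coeff_sum using trm by simp
  also have "\<dots> = sum sign (Perm \<inter> G)" by (simp add: sum.inter_restrict[OF finPerm])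
  also have "Perm \<inter> G = (\<lambda>(x, y). sig n x y) ` P"
  proof
    show "Perm \<inter> G \<subseteq> (\<lambda>(x, y). sig n x y) ` P"
    proof
      fix p assume "p \<in> Perm \<inter> G"
      then obtain x y where "(x, y) \<in> P" "p = sig n x y"
        using good_sig[OF n3 PS] unfolding G_def Perm_def by blast
      then show "p \<in> (\<lambda>(x, y). sig n x y) ` P" by force
    qed
    show "(\<lambda>(x, y). sig n x y) ` P \<subseteq> Perm \<inter> G"
    proof
      fix p assume "p \<in> (\<lambda>(x, y). sig n x y) ` P"
      then obtain x y where xy: "(x, y) \<in> P" "p = sig n x y" by auto
      have b: "2 \<le> x" "x \<le> y" "y < n" using PS xy n3 by auto
      show "p \<in> Perm \<inter> G" using sig_perm[OF b] sig_good[OF n3 PS xy(1)] xy(2)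
        unfolding G_def Perm_def by auto
    qed
  qed
  also have "sum sign ((\<lambda>(x, y). sig n x y) ` P) = (\<Sum>q\<in>P. sign ((\<lambda>(x, y). sig n x y) q))"
    using sum.reindex[OF injP] by (simp add: comp_def)
  also have "\<dots> = (\<Sum>q\<in>P. sign (rho n))"
  proof (rule sum.cong)
    fix q assume q: "q \<in> P"
    obtain x y where qq: "q = (x, y)" by (cases q)
    have b: "2 \<le> x" "x \<le> y" "y < n" using PS q qq n3 by auto
    show "sign ((\<lambda>(x, y). sig n x y) q) = sign (rho n)" using sign_sig[OF b] qq by simp
  qed simp
  also have "\<dots> = int (card P) * sign (rho n)" by simp
  finally have eq: "coeff (coeff (det M) 3) (n - 3) = int (card P) * sign (rho n)" .
  have "finite P"
    by (rule finite_subset[OF PS]) (rule finite_subset[of _ "{0..n} \<times> {0..n}"], auto)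
  then have "card P > 0" using assms(3) by (simp add: card_gt_0_iff)
  then show ?thesis using eq unfolding M_def by simp
qed

end
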